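(* Let $G$ and $H$ be nontrivial groups. Then $|\{x\in G*H: x^2\neq 1\}|=\max\{\aleph_0,|G|,|H|\}$. If moreover at least one of $G,H$ contains an involution, then also $|\{x\in G*H: x^2=1\}|=\max\{\aleph_0,|G|,|H|\}$.
   Context: An involution is an element of order $2$; $G*H$ is the free product. *)

theory Defs
  imports "HOL-Algebra.Group" "HOL-Library.Equipollence"
begin

text \<open>Free product G * H realised by reduced words: lists of letters from
  (carrier G - {1}) + (carrier H - {1}) in which consecutive letters come from
  different factors.\<close>

definition fp_letter :: "('a,'c) monoid_scheme \<Rightarrow> ('b,'d) monoid_scheme \<Rightarrow> 'a + 'b \<Rightarrow> bool" where
  "fp_letter G H x = (case x of Inl g \<Rightarrow> g \<in> carrier G \<and> g \<noteq> \<one>\<^bsub>G\<^esub>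
                               | Inr h \<Rightarrow> h \<in> carrier H \<and> h \<noteq> \<one>\<^bsub>H\<^esub>)"

fun fp_alt :: "('a + 'b) list \<Rightarrow> bool" where
  "fp_alt (Inl _ # Inl _ # _) = False"
| "fp_alt (Inr _ # Inr _ # _) = False"
| "fp_alt (_ # w) = fp_alt w"
| "fp_alt [] = True"

definition fp_reduced :: "('a,'c) monoid_scheme \<Rightarrow> ('b,'d) monoid_scheme \<Rightarrow> ('a + 'b) list \<Rightarrow> bool" where
  "fp_reduced G H w = ((\<forall>x\<in>set w. fp_letter G H x) \<and> fp_alt w)"

fun fp_cons :: "('a,'c) monoid_scheme \<Rightarrow> ('b,'d) monoid_scheme \<Rightarrow> 'a + 'b \<Rightarrow> ('a + 'b) list \<Rightarrow> ('a + 'b) list" where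
  "fp_cons G H (Inl g) (Inl g' # w) =
     (if g \<otimes>\<^bsub>G\<^esub> g' = \<one>\<^bsub>G\<^esub> then w else Inl (g \<otimes>\<^bsub>G\<^esub> g') # w)"
| "fp_cons G H (Inr h) (Inr h' # w) =
     (if h \<otimes>\<^bsub>H\<^esub> h' = \<one>\<^bsub>H\<^esub> then w else Inr (h \<otimes>\<^bsub>H\<^esub> h') # w)"
| "fp_cons G H x w = (if fp_letter G H x then x # w else w)"

definition free_product :: "('a,'c) monoid_scheme \<Rightarrow> ('b,'d) monoid_scheme \<Rightarrow> ('a + 'b) list monoid" where
  "free_product G H =
     \<lparr> carrier = {w. fp_reduced G H w},
       mult = (\<lambda>u v. foldr (fp_cons G H) u v),
       one = [] \<rparr>"

end

theory Submission
  imports Defs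
begin

unbundle cardinal_syntax

lemma lepoll_card: "A \<lesssim> B \<longleftrightarrow> |A| \<le>o |B|"
  by (simp add: lepoll_def card_of_ordLeq[symmetric])

lemma nlists_le:
  assumes "infinite A"
  shows "|{xs. set xs \<subseteq> A \<and> length xs = n}| \<le>o |A|"
proof (induction n)
  case 0
  have "{xs. set xs \<subseteq> A \<and> length xs = 0} = {[]}" by auto
  moreover from assms obtain a where "a \<in> A" by (metis ex_in_conv finite.emptyI)
  ultimately show ?case using card_of_singl_ordLeq[of A "[]"] by (metis empty_iff)
next
  case (Suc n)
  let ?N = "{xs. set xs \<subseteq> A \<and> length xs = n}"
  have "{xs. set xs \<subseteq> A \<and> length xs = Suc n} \<subseteq> (\<lambda>(x,xs). x#xs) ` (A \<times> ?N)"
  proof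
    fix ys assume ys: "ys \<in> {xs. set xs \<subseteq> A \<and> length xs = Suc n}"
    then obtain y zs where "ys = y # zs" by (cases ys) auto
    with ys show "ys \<in> (\<lambda>(x,xs). x#xs) ` (A \<times> ?N)"
      by (intro image_eqI[where x="(y,zs)"]) auto
  qed
  hence "|{xs. set xs \<subseteq> A \<and> length xs = Suc n}| \<le>o |(\<lambda>(x,xs). x#xs) ` (A \<times> ?N)|"
    by (rule card_of_mono1)
  also have "|(\<lambda>(x,xs). x#xs) ` (A \<times> ?N)| \<le>o |A \<times> ?N|" by (rule card_of_image)
  also have "|A \<times> ?N| \<le>o |A \<times> A|" using Suc card_of_Times_mono2 by blast
  also have "|A \<times> A| \<le>o |A|" using card_of_Times_same_infinite[OF assms] ordIso_iff_ordLeq by blast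
  finally show ?case .
qed

lemma lists_le:
  assumes "infinite A"
  shows "lists A \<lesssim> A"
proof -
  have "lists A = (\<Union>n\<in>UNIV. {xs. set xs \<subseteq> A \<and> length xs = n})" by auto
  moreover have "|\<Union>n\<in>(UNIV::nat set). {xs. set xs \<subseteq> A \<and> length xs = n}| \<le>o |A|"
    apply (rule card_of_UNION_ordLeq_infinite)
    using assms nlists_le infinite_iff_card_of_nat by auto
  ultimately show ?thesis by (simp add: lepoll_card)
qed

lemma lepoll_total: "A \<lesssim> B \<or> B \<lesssim> A"
  unfolding lepoll_card by (rule ordLeq_total[OF card_of_Well_order card_of_Well_order])

lemma card_max_aux:
  assumes "infinite M" "(UNIV::nat set) \<lesssim> X" "A \<lesssim> X" "B \<lesssim> X" "X \<lesssim> lists (A <+> B)"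
    "A \<lesssim> M" "B \<lesssim> M" "M \<lesssim> X"
  shows "X \<approx> M"
proof (rule lepoll_antisym)
  have "A <+> B \<lesssim> M <+> M" using assms sum_lepoll_mono by blast
  also have "M <+> M \<lesssim> M"
  proof -
    have "|M <+> M| =o |M|" by (rule card_of_Plus_infinite1[OF assms(1) ordLeq_refl[OF card_of_Card_order]])
    then show ?thesis unfolding lepoll_card using ordIso_iff_ordLeq by blast
  qed
  finally have "lists (A <+> B) \<lesssim> lists M" by (rule lists_lepoll_mono)
  also have "\<dots> \<lesssim> M" using lists_le assms(1) .
  finally show "X \<lesssim> M" using assms(5) lepoll_trans by blast
qed (rule assms(8))

lemma card_max:
  assumes "(UNIV::nat set) \<lesssim> X" "A \<lesssim> X" "B \<lesssim> X" "X \<lesssim> lists (A <+> B)"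
  shows "X \<approx> (UNIV::nat set) \<or> X \<approx> A \<or> X \<approx> B"
proof -
  have inf: "infinite (UNIV::nat set)" by simp
  have fin: "infinite M" if "(UNIV::nat set) \<lesssim> M" for M :: "'x set"
    using that infinite_le_lepoll by blast
  consider "A \<lesssim> (UNIV::nat set)" "B \<lesssim> (UNIV::nat set)"
    | "(UNIV::nat set) \<lesssim> A" "B \<lesssim> A" | "(UNIV::nat set) \<lesssim> B" "A \<lesssim> B"
  proof -
    have t: "A \<lesssim> B \<or> B \<lesssim> A" "A \<lesssim> (UNIV::nat set) \<or> (UNIV::nat set) \<lesssim> A"
      "B \<lesssim> (UNIV::nat set) \<or> (UNIV::nat set) \<lesssim> B" using lepoll_total by blast+
    show ?thesis
    proof (cases "A \<lesssim> (UNIV::nat set) \<and> B \<lesssim> (UNIV::nat set)")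
      case True then show ?thesis using that(1) by blast
    next
      case False
      then consider "(UNIV::nat set) \<lesssim> A" | "(UNIV::nat set) \<lesssim> B" using t by blast
      then show ?thesis
      proof cases
        case 1
        show ?thesis
        proof (cases "B \<lesssim> A")
          case True then show ?thesis using that(2) 1 by blast
        next
          case False then have "A \<lesssim> B" using t by blast
          then show ?thesis using that(3) 1 lepoll_trans by blast
        qed
      next
        case 2
        show ?thesis
        proof (cases "A \<lesssim> B")
          case True then show ?thesis using that(3) 2 by blast
        next
          case False then have "B \<lesssim> A" using t by blast
          then show ?thesis using that(2) 2 lepoll_trans by blast
        qed
      qed
    qed
  qed
  then show ?thesis
  proof cases
    case 1 then show ?thesis using card_max_aux[OF inf assms] assms by auto
  next
    case 2 then show ?thesis using card_max_aux[OF fin[OF 2(1)] assms] assms by auto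
  next
    case 3 then show ?thesis using card_max_aux[OF fin[OF 3(1)] assms] assms by auto
  qed
qed

lemma fp_alt_eq: "fp_alt w = successively (\<lambda>x y. isl x \<noteq> isl y) w"
  by (induction w rule: fp_alt.induct) auto

definition inv_letter :: "('a,'c) monoid_scheme \<Rightarrow> ('b,'d) monoid_scheme \<Rightarrow> 'a + 'b \<Rightarrow> 'a + 'b" where
  "inv_letter G H x = (case x of Inl g \<Rightarrow> Inl (inv\<^bsub>G\<^esub> g) | Inr h \<Rightarrow> Inr (inv\<^bsub>H\<^esub> h))"

definition inv_word :: "('a,'c) monoid_scheme \<Rightarrow> ('b,'d) monoid_scheme \<Rightarrow> ('a + 'b) list \<Rightarrow> ('a + 'b) list" where
  "inv_word G H w = rev (map (inv_letter G H) w)"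

context
  fixes G :: "('a,'c) monoid_scheme" and H :: "('b,'d) monoid_scheme"
  assumes G: "group G" and H: "group H"
begin

lemma isl_inv_letter [simp]: "isl (inv_letter G H x) = isl x"
  by (cases x) (auto simp: inv_letter_def)

lemma letter_inv: "fp_letter G H x \<Longrightarrow> fp_letter G H (inv_letter G H x)"
  using G H by (cases x) (auto simp: inv_letter_def fp_letter_def group.inv_eq_1_iff)

lemma inv_inv_letter: "fp_letter G H x \<Longrightarrow> inv_letter G H (inv_letter G H x) = x"
  using G H by (cases x) (auto simp: inv_letter_def fp_letter_def group.inv_inv)

lemma cons_inv: "fp_letter G H x \<Longrightarrow> fp_cons G H (inv_letter G H x) (x # r) = r"
  using G H by (cases x) (auto simp: inv_letter_def fp_letter_def group.l_inv)

lemma cancel1: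
  "\<forall>x\<in>set w. fp_letter G H x \<Longrightarrow> foldr (fp_cons G H) (inv_word G H w) (w @ v) = v"
  by (induction w) (auto simp: inv_word_def cons_inv)

lemma inv_word_letters: "\<forall>x\<in>set w. fp_letter G H x \<Longrightarrow> \<forall>x\<in>set (inv_word G H w). fp_letter G H x"
  by (auto simp: inv_word_def letter_inv)

lemma inv_inv_word: "\<forall>x\<in>set w. fp_letter G H x \<Longrightarrow> inv_word G H (inv_word G H w) = w"
  by (induction w) (auto simp: inv_word_def inv_inv_letter)

lemma cancel2:
  "\<forall>x\<in>set w. fp_letter G H x \<Longrightarrow> foldr (fp_cons G H) w (inv_word G H w @ v) = v"
  using cancel1[OF inv_word_letters, of w v] inv_inv_word by simp

lemma concat_mult:
  "\<forall>x\<in>set w. fp_letter G H x \<Longrightarrow> successively (\<lambda>x y. isl x \<noteq> isl y) (w @ v)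
   \<Longrightarrow> foldr (fp_cons G H) w v = w @ v"
proof (induction w)
  case Nil then show ?case by simp
next
  case (Cons x w)
  then have IH: "foldr (fp_cons G H) w v = w @ v"
    by (cases "w @ v") auto
  show ?case
  proof (cases "w @ v")
    case Nil then show ?thesis using IH Cons.prems by (cases x) (auto simp: fp_letter_def)
  next
    case (Cons y r)
    then show ?thesis using IH Cons.prems
      by (cases x; cases y) (auto simp: fp_letter_def)
  qed
qed

lemma S_mem:
  assumes "w \<noteq> []" "\<forall>x\<in>set w. fp_letter G H x" "successively (\<lambda>x y. isl x \<noteq> isl y) w"
    "isl (hd w)" "\<not> isl (last w)"
  shows "fp_reduced G H w \<and> foldr (fp_cons G H) w w \<noteq> []"
proof -
  have "successively (\<lambda>x y. isl x \<noteq> isl y) (w @ w)"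
    using assms by (simp add: successively_append_iff)
  then have "foldr (fp_cons G H) w w = w @ w" using concat_mult assms(2) by blast
  then show ?thesis using assms by (simp add: fp_reduced_def fp_alt_eq)
qed

lemma succ_inv_word: "successively (\<lambda>x y. isl x \<noteq> isl y) (inv_word G H w) = successively (\<lambda>x y. isl x \<noteq> isl y) w"
proof -
  have e: "(\<lambda>x y. isl y \<noteq> isl x) = (\<lambda>x y. isl x \<noteq> isl y)" by auto
  show ?thesis by (simp only: inv_word_def successively_rev successively_map isl_inv_letter e)
qed

lemma T_mem:
  assumes tau: "fp_letter G H tau" "\<And>r. fp_cons G H tau (tau # r) = r"
    and w: "\<forall>x\<in>set w. fp_letter G H x" "successively (\<lambda>x y. isl x \<noteq> isl y) (w @ [tau])"
  shows "fp_reduced G H (w @ [tau] @ inv_word G H w)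
     \<and> foldr (fp_cons G H) (w @ [tau] @ inv_word G H w) (w @ [tau] @ inv_word G H w) = []"
proof
  have sw: "successively (\<lambda>x y. isl x \<noteq> isl y) w" using w(2) by (simp add: successively_append_iff)
  have j: "w \<noteq> [] \<Longrightarrow> isl (last w) \<noteq> isl tau" using w(2) by (simp add: successively_append_iff)
  have "successively (\<lambda>x y. isl x \<noteq> isl y) ((w @ [tau]) @ inv_word G H w)"
    unfolding successively_append_iff
    using w(2) sw j unfolding succ_inv_word by (auto simp: inv_word_def hd_rev last_map)
  then show "fp_reduced G H (w @ [tau] @ inv_word G H w)"
    using tau w inv_word_letters[OF w(1)] by (auto simp: fp_reduced_def fp_alt_eq)
next
  have "foldr (fp_cons G H) (w @ [tau] @ inv_word G H w) (w @ [tau] @ inv_word G H w)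
     = foldr (fp_cons G H) w (fp_cons G H tau (foldr (fp_cons G H) (inv_word G H w) (w @ ([tau] @ inv_word G H w))))"
    by simp
  also have "\<dots> = foldr (fp_cons G H) w (inv_word G H w @ [])"
    using cancel1[OF w(1)] tau(2) by simp
  also have "\<dots> = []" using cancel2[OF w(1)] by blast
  finally show "foldr (fp_cons G H) (w @ [tau] @ inv_word G H w) (w @ [tau] @ inv_word G H w) = []" .
qed

lemma T_lepoll:
  assumes tau: "fp_letter G H tau" "\<And>r. fp_cons G H tau (tau # r) = r"
    and f: "inj_on f A" "\<And>x. x \<in> A \<Longrightarrow> (\<forall>y\<in>set (f x). fp_letter G H y) \<and> successively (\<lambda>x y. isl x \<noteq> isl y) (f x @ [tau])"
  shows "A \<lesssim> {x. fp_reduced G H x \<and> foldr (fp_cons G H) x x = []}"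
  unfolding lepoll_def
proof (intro exI conjI)
  let ?c = "\<lambda>w. w @ [tau] @ inv_word G H w"
  have ic: "inj ?c"
  proof (rule injI)
    fix u v assume e: "?c u = ?c v"
    then have "length (?c u) = length (?c v)" by simp
    then have "length u = length v" by (simp add: inv_word_def)
    then show "u = v" using arg_cong[OF e, of "take (length u)"] by simp
  qed
  show "inj_on (?c \<circ> f) A" using f(1) ic by (simp add: comp_inj_on inj_on_subset)
  show "(?c \<circ> f) ` A \<subseteq> {x. fp_reduced G H x \<and> foldr (fp_cons G H) x x = []}"
    using T_mem[OF tau] f(2) by auto
qed

lemma rep_word:
  assumes "isl p \<noteq> isl q"
  shows "successively (\<lambda>x y. isl x \<noteq> isl y) (concat (replicate (Suc n) [p,q]))
    \<and> hd (concat (replicate (Suc n) [p,q])) = p \<and> last (concat (replicate (Suc n) [p,q])) = q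
    \<and> set (concat (replicate (Suc n) [p,q])) = {p,q}
    \<and> length (concat (replicate (Suc n) [p,q])) = 2 * Suc n"
proof (induction n)
  case 0 then show ?case using assms by auto
next
  case (Suc n)
  have "concat (replicate (Suc (Suc n)) [p,q]) = [p,q] @ concat (replicate (Suc n) [p,q])" by simp
  then show ?case using Suc assms
    by (simp only:) (auto simp: successively_append_iff)
qed

end

lemma gen:
  assumes "successively (\<lambda>x y. isl x \<noteq> isl y) w \<and> last w = q \<and> set w = {p,q}"
    "fp_letter G H p" "fp_letter G H q" "isl q \<noteq> isl x"
  shows "(\<forall>y\<in>set w. fp_letter G H y) \<and> successively (\<lambda>x y. isl x \<noteq> isl y) (w @ [x])"
proof -
  have "w \<noteq> []" using assms(1) by auto
  then show ?thesis using assms by (auto simp: successively_append_iff)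
qed

theorem lemma20:
  fixes G :: "('a,'c) monoid_scheme" and H :: "('b,'d) monoid_scheme"
  assumes "group G" and "group H"
    and "carrier G \<noteq> {\<one>\<^bsub>G\<^esub>}" and "carrier H \<noteq> {\<one>\<^bsub>H\<^esub>}"
  defines "F \<equiv> free_product G H"
  defines "S \<equiv> {x \<in> carrier F. x \<otimes>\<^bsub>F\<^esub> x \<noteq> \<one>\<^bsub>F\<^esub>}"
  defines "T \<equiv> {x \<in> carrier F. x \<otimes>\<^bsub>F\<^esub> x = \<one>\<^bsub>F\<^esub>}"
  shows "((UNIV::nat set) \<lesssim> S \<and> carrier G \<lesssim> S \<and> carrier H \<lesssim> S
          \<and> (S \<approx> (UNIV::nat set) \<or> S \<approx> carrier G \<or> S \<approx> carrier H))
       \<and> ((\<exists>x\<in>carrier G. x \<noteq> \<one>\<^bsub>G\<^esub> \<and> x \<otimes>\<^bsub>G\<^esub> x = \<one>\<^bsub>G\<^esub>)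
            \<or> (\<exists>y\<in>carrier H. y \<noteq> \<one>\<^bsub>H\<^esub> \<and> y \<otimes>\<^bsub>H\<^esub> y = \<one>\<^bsub>H\<^esub>)
          \<longrightarrow> ((UNIV::nat set) \<lesssim> T \<and> carrier G \<lesssim> T \<and> carrier H \<lesssim> T
               \<and> (T \<approx> (UNIV::nat set) \<or> T \<approx> carrier G \<or> T \<approx> carrier H)))"
  proof -
  note G = assms(1) and H = assms(2)
  have oneG: "\<one>\<^bsub>G\<^esub> \<in> carrier G" by (simp add: G group.is_monoid monoid.one_closed)
  have oneH: "\<one>\<^bsub>H\<^esub> \<in> carrier H" by (simp add: H group.is_monoid monoid.one_closed)
  obtain a where a: "a \<in> carrier G" "a \<noteq> \<one>\<^bsub>G\<^esub>" using assms(3) oneG by blast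
  obtain b where b: "b \<in> carrier H" "b \<noteq> \<one>\<^bsub>H\<^esub>" using assms(4) oneH by blast
  have la: "fp_letter G H (Inl a)" and lb: "fp_letter G H (Inr b)" using a b by (auto simp: fp_letter_def)
  have S_eq: "S = {x. fp_reduced G H x \<and> foldr (fp_cons G H) x x \<noteq> []}"
    by (simp add: S_def F_def free_product_def)
  have T_eq: "T = {x. fp_reduced G H x \<and> foldr (fp_cons G H) x x = []}"
    by (simp add: T_def F_def free_product_def)
  have red: "{x. fp_reduced G H x} \<subseteq> lists (carrier G <+> carrier H)"
  proof
    fix w assume "w \<in> {x. fp_reduced G H x}"
    then have "\<forall>x\<in>set w. fp_letter G H x" by (simp add: fp_reduced_def)
    moreover have "fp_letter G H x \<Longrightarrow> x \<in> carrier G <+> carrier H" for x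
      by (cases x) (auto simp: fp_letter_def)
    ultimately show "w \<in> lists (carrier G <+> carrier H)" by auto
  qed
  have S_up: "S \<lesssim> lists (carrier G <+> carrier H)"
    by (rule subset_imp_lepoll) (use red S_eq in auto)
  have T_up: "T \<lesssim> lists (carrier G <+> carrier H)"
    by (rule subset_imp_lepoll) (use red T_eq in auto)
  have rw: "\<And>n p q. isl p \<noteq> isl q \<Longrightarrow> successively (\<lambda>x y. isl x \<noteq> isl y) (concat (replicate (Suc n) [p,q]))
    \<and> hd (concat (replicate (Suc n) [p,q])) = p \<and> last (concat (replicate (Suc n) [p,q])) = q
    \<and> set (concat (replicate (Suc n) [p,q])) = {p,q}
    \<and> length (concat (replicate (Suc n) [p,q])) = 2 * Suc n"
    by (rule rep_word[OF G H])
  have injlen: "inj (\<lambda>n. concat (replicate (Suc n) [p,q]))" if "isl p \<noteq> isl q" for p q :: "'a + 'b"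
  proof (rule injI)
    fix m n assume "concat (replicate (Suc m) [p,q]) = concat (replicate (Suc n) [p,q])"
    then have "length (concat (replicate (Suc m) [p,q])) = length (concat (replicate (Suc n) [p,q]))" by simp
    then show "m = n" using rw[OF that, of m] rw[OF that, of n] by simp
  qed
  have pq: "isl (Inl a::'a+'b) \<noteq> isl (Inr b::'a+'b)" "isl (Inr b::'a+'b) \<noteq> isl (Inl a::'a+'b)" by simp_all
  have Smem: "\<And>w. w \<noteq> [] \<Longrightarrow> \<forall>x\<in>set w. fp_letter G H x \<Longrightarrow> successively (\<lambda>x y. isl x \<noteq> isl y) w
    \<Longrightarrow> isl (hd w) \<Longrightarrow> \<not> isl (last w) \<Longrightarrow> w \<in> S"
    using S_mem[OF G H] S_eq by blast
  have S1: "(UNIV::nat set) \<lesssim> S"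
    unfolding lepoll_def
  proof (intro exI conjI)
    show "inj_on (\<lambda>n. concat (replicate (Suc n) [Inl a, Inr b])) UNIV" using injlen by simp
    show "(\<lambda>n. concat (replicate (Suc n) [Inl a, Inr b])) ` UNIV \<subseteq> S"
    proof clarify
      fix n
      have r: "successively (\<lambda>x y. isl x \<noteq> isl y) (concat (replicate (Suc n) [Inl a, Inr b :: 'a + 'b]))
    \<and> hd (concat (replicate (Suc n) [Inl a, Inr b :: 'a + 'b])) = Inl a \<and> last (concat (replicate (Suc n) [Inl a, Inr b :: 'a + 'b])) = Inr b
    \<and> set (concat (replicate (Suc n) [Inl a, Inr b :: 'a + 'b])) = {Inl a, Inr b}
    \<and> length (concat (replicate (Suc n) [Inl a, Inr b :: 'a + 'b])) = 2 * Suc n" using rw[OF pq(1), of n] by blast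
      show "concat (replicate (Suc n) [Inl a, Inr b]) \<in> S"
        by (rule Smem) (use r la lb in auto)
    qed
  qed
  have S2: "carrier G \<lesssim> S"
    unfolding lepoll_def
  proof (intro exI conjI)
    let ?f = "\<lambda>g. if g = \<one>\<^bsub>G\<^esub> then [Inl a, Inr b, Inl a, Inr b] else [Inl g, Inr b :: 'a + 'b]"
    show "inj_on ?f (carrier G)" by (auto simp: inj_on_def)
    show "?f ` carrier G \<subseteq> S"
    proof clarify
      fix g assume "g \<in> carrier G"
      then show "?f g \<in> S" using la lb by (intro Smem) (auto simp: fp_letter_def)
    qed
  qed
  have S3: "carrier H \<lesssim> S"
    unfolding lepoll_def
  proof (intro exI conjI)
    let ?f = "\<lambda>h. if h = \<one>\<^bsub>H\<^esub> then [Inl a, Inr b, Inl a, Inr b] else [Inl a, Inr h :: 'a + 'b]"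
    show "inj_on ?f (carrier H)" by (auto simp: inj_on_def)
    show "?f ` carrier H \<subseteq> S"
    proof clarify
      fix h assume "h \<in> carrier H"
      then show "?f h \<in> S" using la lb by (intro Smem) (auto simp: fp_letter_def)
    qed
  qed
  have partS: "(UNIV::nat set) \<lesssim> S \<and> carrier G \<lesssim> S \<and> carrier H \<lesssim> S
          \<and> (S \<approx> (UNIV::nat set) \<or> S \<approx> carrier G \<or> S \<approx> carrier H)"
    using S1 S2 S3 card_max[OF S1 S2 S3 S_up] by blast
  have partT: "(UNIV::nat set) \<lesssim> T \<and> carrier G \<lesssim> T \<and> carrier H \<lesssim> T
               \<and> (T \<approx> (UNIV::nat set) \<or> T \<approx> carrier G \<or> T \<approx> carrier H)"
    if inv: "(\<exists>x\<in>carrier G. x \<noteq> \<one>\<^bsub>G\<^esub> \<and> x \<otimes>\<^bsub>G\<^esub> x = \<one>\<^bsub>G\<^esub>)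
            \<or> (\<exists>y\<in>carrier H. y \<noteq> \<one>\<^bsub>H\<^esub> \<and> y \<otimes>\<^bsub>H\<^esub> y = \<one>\<^bsub>H\<^esub>)"
  proof -
    have T123: "(UNIV::nat set) \<lesssim> T \<and> carrier G \<lesssim> T \<and> carrier H \<lesssim> T"
      using inv
    proof
      assume "\<exists>x\<in>carrier G. x \<noteq> \<one>\<^bsub>G\<^esub> \<and> x \<otimes>\<^bsub>G\<^esub> x = \<one>\<^bsub>G\<^esub>"
      then obtain t where t: "t \<in> carrier G" "t \<noteq> \<one>\<^bsub>G\<^esub>" "t \<otimes>\<^bsub>G\<^esub> t = \<one>\<^bsub>G\<^esub>" by blast
      have lt: "fp_letter G H (Inl t)" using t by (simp add: fp_letter_def)
      have ct: "\<And>r. fp_cons G H (Inl t) (Inl t # r) = r" using t by simp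
      note TL = T_lepoll[OF G H lt ct, folded T_eq]
      show ?thesis
      proof (intro conjI)
        show "(UNIV::nat set) \<lesssim> T"
        proof (rule TL)
          show "inj_on (\<lambda>n. concat (replicate (Suc n) [Inl a, Inr b])) UNIV" using injlen by simp
          fix n :: nat
          have r: "successively (\<lambda>x y. isl x \<noteq> isl y) (concat (replicate (Suc n) [Inl a, Inr b :: 'a + 'b]))
             \<and> last (concat (replicate (Suc n) [Inl a, Inr b :: 'a + 'b])) = Inr b
             \<and> set (concat (replicate (Suc n) [Inl a, Inr b :: 'a + 'b])) = {Inl a, Inr b}" using rw[OF pq(1), of n] by blast
          show "(\<forall>y\<in>set (concat (replicate (Suc n) [Inl a, Inr b])). fp_letter G H y) \<and>
            successively (\<lambda>x y. isl x \<noteq> isl y) (concat (replicate (Suc n) [Inl a, Inr b]) @ [Inl t])"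
            by (rule gen[OF r la lb]) simp
        qed
        show "carrier G \<lesssim> T"
        proof (rule TL)
          show "inj_on (\<lambda>g. if g = \<one>\<^bsub>G\<^esub> then [] else [Inl g, Inr b]) (carrier G)" by (auto simp: inj_on_def)
          fix g assume "g \<in> carrier G"
          then show "(\<forall>y\<in>set (if g = \<one>\<^bsub>G\<^esub> then [] else [Inl g, Inr b]). fp_letter G H y) \<and>
            successively (\<lambda>x y. isl x \<noteq> isl y) ((if g = \<one>\<^bsub>G\<^esub> then [] else [Inl g, Inr b]) @ [Inl t])"
            using lb by (auto simp: fp_letter_def)
        qed
        show "carrier H \<lesssim> T"
        proof (rule TL)
          show "inj_on (\<lambda>h. if h = \<one>\<^bsub>H\<^esub> then [] else [Inr h]) (carrier H)" by (auto simp: inj_on_def)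
          fix h assume "h \<in> carrier H"
          then show "(\<forall>y\<in>set (if h = \<one>\<^bsub>H\<^esub> then [] else [Inr h]). fp_letter G H y) \<and>
            successively (\<lambda>x y. isl x \<noteq> isl y) ((if h = \<one>\<^bsub>H\<^esub> then [] else [Inr h]) @ [Inl t])"
            by (auto simp: fp_letter_def)
        qed
      qed
    next
      assume "\<exists>y\<in>carrier H. y \<noteq> \<one>\<^bsub>H\<^esub> \<and> y \<otimes>\<^bsub>H\<^esub> y = \<one>\<^bsub>H\<^esub>"
      then obtain t where t: "t \<in> carrier H" "t \<noteq> \<one>\<^bsub>H\<^esub>" "t \<otimes>\<^bsub>H\<^esub> t = \<one>\<^bsub>H\<^esub>" by blast
      have lt: "fp_letter G H (Inr t)" using t by (simp add: fp_letter_def)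
      have ct: "\<And>r. fp_cons G H (Inr t) (Inr t # r) = r" using t by simp
      note TL = T_lepoll[OF G H lt ct, folded T_eq]
      show ?thesis
      proof (intro conjI)
        show "(UNIV::nat set) \<lesssim> T"
        proof (rule TL)
          show "inj_on (\<lambda>n. concat (replicate (Suc n) [Inr b, Inl a])) UNIV" using injlen by simp
          fix n :: nat
          have r: "successively (\<lambda>x y. isl x \<noteq> isl y) (concat (replicate (Suc n) [Inr b, Inl a :: 'a + 'b]))
             \<and> last (concat (replicate (Suc n) [Inr b, Inl a :: 'a + 'b])) = Inl a
             \<and> set (concat (replicate (Suc n) [Inr b, Inl a :: 'a + 'b])) = {Inr b, Inl a}" using rw[OF pq(2), of n] by blast
          show "(\<forall>y\<in>set (concat (replicate (Suc n) [Inr b, Inl a])). fp_letter G H y) \<and>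
            successively (\<lambda>x y. isl x \<noteq> isl y) (concat (replicate (Suc n) [Inr b, Inl a]) @ [Inr t])"
            by (rule gen[OF r lb la]) simp
        qed
        show "carrier G \<lesssim> T"
        proof (rule TL)
          show "inj_on (\<lambda>g. if g = \<one>\<^bsub>G\<^esub> then [] else [Inl g]) (carrier G)" by (auto simp: inj_on_def)
          fix g assume "g \<in> carrier G"
          then show "(\<forall>y\<in>set (if g = \<one>\<^bsub>G\<^esub> then [] else [Inl g]). fp_letter G H y) \<and>
            successively (\<lambda>x y. isl x \<noteq> isl y) ((if g = \<one>\<^bsub>G\<^esub> then [] else [Inl g]) @ [Inr t])"
            by (auto simp: fp_letter_def)
        qed
        show "carrier H \<lesssim> T"
        proof (rule TL)
          show "inj_on (\<lambda>h. if h = \<one>\<^bsub>H\<^esub> then [] else [Inr h, Inl a]) (carrier H)" by (auto simp: inj_on_def)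
          fix h assume "h \<in> carrier H"
          then show "(\<forall>y\<in>set (if h = \<one>\<^bsub>H\<^esub> then [] else [Inr h, Inl a]). fp_letter G H y) \<and>
            successively (\<lambda>x y. isl x \<noteq> isl y) ((if h = \<one>\<^bsub>H\<^esub> then [] else [Inr h, Inl a]) @ [Inr t])"
            using la by (auto simp: fp_letter_def)
        qed
      qed
    qed
    then show ?thesis using card_max[OF _ _ _ T_up] by blast
  qed
  show ?thesis using partS partT by blast
qed

end
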